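(* Let $A$ be the set of triples $(n,\ell,m)\in\mathbb{Z}^3$ with $m,n>0$, $4\frac nN m-\ell^2>0$ and $$\min_{m_1\in N\mathbb{Z},\ s\in\mathbb{Z},\ s(s+1)\equiv0\bmod m_1}\left[\left(\frac{m_1\ell+2ms+m}{m}\right)^2+\frac{m_1^2}{m^2}\left(4\frac nNm-\ell^2\right)\right]\ge1.$$ If $(n,\ell,m)\in A$, then the partition function $\widetilde\Phi_k^{-1}$ does not have poles in the region bounded by the contours $\mathcal{C}$ and $\mathcal{C}'$.
   Context: $\widetilde\Phi_k^{-1}$ is the $\mathbb{Z}_N$ CHL dyon partition function; its poles (double zeros of $\widetilde\Phi_k$) lie on $n_2(\sigma\tau-z^2)+jz+n_1\sigma-m_1\tau+m_2=0$ with $m_1\in N\mathbb{Z}$, $n_1,m_2,n_2\in\mathbb{Z}$, $j\in2\mathbb{Z}+1$, $m_1n_1+m_2n_2+j^2/4=1/4$. The attractor contour $\mathcal{C}$ is $\mathrm{Im}\,\tau=\frac{2n}{N\varepsilon}$, $\mathrm{Im}\,\sigma=\frac{2m}{\varepsilon}$, $\mathrm{Im}\,z=-\frac{\ell}{\varepsilon}$, $0\le\mathrm{Re}\,\tau,\mathrm{Re}\,z<1$, $0\le\mathrm{Re}\,\sigma<N$, with $\varepsilon>0$ small; $\mathcal{C}'$ is the same contour but with $\mathrm{Im}\,\tau\to\infty$ ($\mathrm{Im}\,\sigma$, $\mathrm{Im}\,z$ fixed). (Poles lying exactly on $\mathcal{C}$ have vanishing residue and are harmless.) *)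

theory Defs
  imports "HOL-Analysis.Analysis" "HOL-Number_Theory.Cong"
begin

text \<open>The set A of triples (n, l, m) (N is the order of the CHL orbifold Z_N).
  The minimum over m1 in N*Z and s with s(s+1) = 0 mod m1 being at least 1 is
  written out as: every value of the bracket is at least 1.\<close>
definition A_set :: "nat \<Rightarrow> (int \<times> int \<times> int) set" where
  "A_set N = {(n, l, m). m > 0 \<and> n > 0 \<and>
      4 * (real_of_int n / real N) * real_of_int m - (real_of_int l)^2 > 0 \<and>
      (\<forall>m1 s :: int. int N dvd m1 \<and> [s * (s + 1) = 0] (mod m1) \<longrightarrow>
         ((real_of_int (m1 * l + 2 * m * s + m)) / real_of_int m)^2
         + (real_of_int m1)^2 / (real_of_int m)^2
             * (4 * (real_of_int n / real N) * real_of_int m - (real_of_int l)^2) \<ge> 1)}"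

text \<open>(tau, sigma, z) lies on the zero divisor of Phi_k labelled by (m1, n1, m2, n2, j).\<close>
definition on_divisor :: "nat \<Rightarrow> complex \<Rightarrow> complex \<Rightarrow> complex \<Rightarrow> int \<Rightarrow> int \<Rightarrow> int \<Rightarrow> int \<Rightarrow> int \<Rightarrow> bool" where
  "on_divisor N \<tau> \<sigma> z m1 n1 m2 n2 j \<longleftrightarrow>
     int N dvd m1 \<and> odd j \<and>
     real_of_int (m1 * n1 + m2 * n2) + (real_of_int j)^2 / 4 = 1 / 4 \<and>
     of_int n2 * (\<sigma> * \<tau> - z^2) + of_int j * z + of_int n1 * \<sigma> - of_int m1 * \<tau> + of_int m2 = 0"

text \<open>A pole of the partition function at (tau, sigma, z) that is a genuine pole in the
  tau-variable, i.e. lies on a divisor whose equation actually depends on tau at the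
  given (sigma, z) (coefficient n2*sigma - m1 of tau nonzero).  Divisors with
  n2*sigma - m1 = 0 contain the whole tau-line and hence lie on the contour C itself
  (such poles are harmless by the standing assumption).\<close>
definition tau_pole :: "nat \<Rightarrow> complex \<Rightarrow> complex \<Rightarrow> complex \<Rightarrow> bool" where
  "tau_pole N \<tau> \<sigma> z \<longleftrightarrow>
     (\<exists>m1 n1 m2 n2 j. on_divisor N \<tau> \<sigma> z m1 n1 m2 n2 j \<and> of_int n2 * \<sigma> - of_int m1 \<noteq> 0)"

text \<open>The region strictly between the contour C (Im tau = 2n/(N eps)) and C'
  (Im tau = infinity), at fixed Im sigma = 2m/eps, Im z = -l/eps.\<close>
definition between_C_C' :: "nat \<Rightarrow> int \<Rightarrow> int \<Rightarrow> int \<Rightarrow> real \<Rightarrow> complex \<Rightarrow> complex \<Rightarrow> complex \<Rightarrow> bool" where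
  "between_C_C' N n l m \<epsilon> \<tau> \<sigma> z \<longleftrightarrow>
     Im \<tau> > 2 * real_of_int n / (real N * \<epsilon>) \<and>
     Im \<sigma> = 2 * real_of_int m / \<epsilon> \<and>
     Im z = - real_of_int l / \<epsilon> \<and>
     0 \<le> Re \<tau> \<and> Re \<tau> < 1 \<and> 0 \<le> Re z \<and> Re z < 1 \<and> 0 \<le> Re \<sigma> \<and> Re \<sigma> < real N"

end

theory Submission
  imports Defs
begin

lemma key_ineq:
  fixes a b c y1 y2 y3 :: real
  assumes "a*y3 + c*y1 - 2*b*y2 = 0" "y1 > 0" "y3 > 0" "y1*y3 > y2^2"
  shows "a*c \<le> b^2"
proof -
  have "(a*y3 + c*y1)^2 \<ge> 4*(a*y3)*(c*y1)"
    using sum_squares_ge_zero[of "a*y3 - c*y1" 0] by (simp add: power2_eq_square algebra_simps)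
  moreover have "(a*y3 + c*y1)^2 = 4*b^2*y2^2" using assms(1)
    by (simp add: eq_diff_eq power2_eq_square algebra_simps)
  moreover have "b^2*y2^2 \<le> b^2*(y1*y3)" using assms(4) by (simp add: mult_left_mono)
  ultimately have "(a*c)*(y1*y3) \<le> b^2*(y1*y3)" by (simp add: algebra_simps)
  moreover have "y1*y3 > 0" using assms by simp
  ultimately show ?thesis by (meson mult_le_cancel_right_pos)
qed

lemma case_n2:
  fixes x1 x2 x3 y1 y2 y3 m1 n1 m2 n2 j :: real
  assumes re: "n2*(x3*x1 - y3*y1 - (x2*x2 - y2*y2)) + j*x2 + n1*x3 - m1*x1 + m2 = 0"
    and im: "n2*(x3*y1 + y3*x1 - 2*x2*y2) + j*y2 + n1*y3 - m1*y1 = 0"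
    and D: "m1*n1 + m2*n2 + j^2/4 = 1/4"
    and pos: "y1 > 0" "y3 > 0" and det: "y1*y3 - y2^2 > 1" and n2: "n2^2 \<ge> 1"
  shows False
proof -
  define a where "a = n2*x1 + n1"
  define b where "b = n2*x2 - j/2"
  define c where "c = n2*x3 - m1"
  have i: "a*y3 + c*y1 - 2*b*y2 = 0" using im unfolding a_def b_def c_def
    by (simp add: algebra_simps)
  have r: "a*c - b^2 + 1/4 = n2^2*(y1*y3 - y2^2)"
  proof -
    have "n2 * (n2*(x3*x1 - y3*y1 - (x2*x2 - y2*y2)) + j*x2 + n1*x3 - m1*x1 + m2) = 0"
      using re by simp
    then show ?thesis using D unfolding a_def b_def c_def
      by (simp add: algebra_simps power2_eq_square)
  qed
  have "a*c \<le> b^2" using key_ineq[OF i pos(1) pos(2)] det by simp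
  moreover have "n2^2*(y1*y3 - y2^2) > 1"
  proof -
    have "1*(y1*y3 - y2^2) \<le> n2^2*(y1*y3 - y2^2)"
      using mult_right_mono[OF n2, of "y1*y3 - y2^2"] det by simp
    then show ?thesis using det unfolding mult_1 by linarith
  qed
  ultimately show False using r by simp
qed

lemma case_n20:
  fixes y1 y2 y3 m1 n1 j eps l m n NN :: real
  assumes im: "j*y2 + n1*y3 - m1*y1 = 0"
    and y2: "y2 = - l/eps" and y3: "y3 = 2*m/eps" and y1: "y1 > 2*n/(NN*eps)"
    and eps: "eps > 0" and NN: "NN > 0" and m: "m > 0" and m1: "m1 \<noteq> 0"
    and A: "m1*l*j - 2*m*m1*n1 + 2*m1^2*n/NN \<ge> 0"
  shows False
proof -
  have "m1*y1*eps = 2*n1*m - j*l" using im y2 y3 eps by (simp add: field_simps)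
  hence "m1*(m1*y1*eps) = m1*(2*n1*m - j*l)" by simp
  hence e: "m1^2*y1*eps = m1*(2*n1*m - j*l)" by (simp add: power2_eq_square mult.assoc)
  have "y1*eps > 2*n/NN" using y1 eps NN by (simp add: field_simps)
  moreover have "m1^2 > 0" using m1 by simp
  ultimately have "m1^2*(y1*eps) > m1^2*(2*n/NN)" by (rule mult_strict_left_mono)
  thus False using e A by (simp add: algebra_simps)
qed

lemma alg_A:
  fixes m1 l m j n1 n NN c0 :: real
  assumes H: "(m1*l + m*j)^2 + m1^2*c0 \<ge> m^2"
    and jr: "j^2 = 1 - 4*m1*n1" and c0: "c0 = 4*(n/NN)*m - l^2" and m: "m > 0"
  shows "m1*l*j - 2*m*m1*n1 + 2*m1^2*n/NN \<ge> 0"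
proof -
  have "(m1*l + m*j)^2 = m1^2*l^2 + 2*m1*l*m*j + m^2*j^2" by (simp add: power2_sum power_mult_distrib)
  also have "... = m1^2*l^2 + 2*m1*l*m*j + m^2 - 4*m^2*m1*n1" unfolding jr by (simp add: algebra_simps)
  finally have "(m1*l + m*j)^2 + m1^2*c0 - m^2 = 2*m*(m1*l*j - 2*m*m1*n1 + 2*m1^2*n/NN)"
    unfolding c0 by (simp add: algebra_simps power2_eq_square)
  hence "2*m*(m1*l*j - 2*m*m1*n1 + 2*m1^2*n/NN) \<ge> 0" using H by linarith
  thus ?thesis using m by (simp add: zero_le_mult_iff)
qed

theorem propositionB1:
  fixes N :: nat and n l m :: int
  assumes "N \<ge> 1"
    and "(n, l, m) \<in> A_set N"
  shows "\<exists>\<epsilon>0 > 0. \<forall>\<epsilon>. 0 < \<epsilon> \<and> \<epsilon> < \<epsilon>0 \<longrightarrow>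
           \<not> (\<exists>\<tau> \<sigma> z. between_C_C' N n l m \<epsilon> \<tau> \<sigma> z \<and> tau_pole N \<tau> \<sigma> z)"
proof -
  define c0 where "c0 = 4 * (real_of_int n / real N) * real_of_int m - (real_of_int l)^2"
  have mpos: "m > 0" and npos: "n > 0" and c0: "c0 > 0"
   and AA: "\<And>m1 s :: int. int N dvd m1 \<Longrightarrow> [s * (s + 1) = 0] (mod m1) \<Longrightarrow>
         ((real_of_int (m1 * l + 2 * m * s + m)) / real_of_int m)^2
         + (real_of_int m1)^2 / (real_of_int m)^2 * c0 \<ge> 1"
    using assms(2) unfolding A_set_def c0_def by auto
  have NN: "real N > 0" using assms(1) by simp
  show ?thesis
  proof (intro exI[of _ "min 1 c0"] conjI allI impI)
    show "min 1 c0 > 0" using c0 by simp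
    fix eps :: real assume "0 < eps \<and> eps < min 1 c0"
    hence eps: "eps > 0" "eps < 1" "eps < c0" by auto
    show "\<not> (\<exists>\<tau> \<sigma> z. between_C_C' N n l m eps \<tau> \<sigma> z \<and> tau_pole N \<tau> \<sigma> z)"
    proof
      assume "\<exists>\<tau> \<sigma> z. between_C_C' N n l m eps \<tau> \<sigma> z \<and> tau_pole N \<tau> \<sigma> z"
      then obtain \<tau> \<sigma> z m1 n1 m2 n2 j where bt: "between_C_C' N n l m eps \<tau> \<sigma> z"
        and od: "on_divisor N \<tau> \<sigma> z m1 n1 m2 n2 j" and nz: "of_int n2 * \<sigma> - of_int m1 \<noteq> 0"
        unfolding tau_pole_def by blast
      have y1: "Im \<tau> > 2 * real_of_int n / (real N * eps)" and y3: "Im \<sigma> = 2 * real_of_int m / eps"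
        and y2: "Im z = - real_of_int l / eps" using bt unfolding between_C_C'_def by auto
      have dv: "int N dvd m1" and jo: "odd j"
        and D: "real_of_int (m1 * n1 + m2 * n2) + (real_of_int j)^2 / 4 = 1 / 4"
        and E: "of_int n2 * (\<sigma> * \<tau> - z^2) + of_int j * z + of_int n1 * \<sigma> - of_int m1 * \<tau> + of_int m2 = 0"
        using od unfolding on_divisor_def by auto
      have re: "n2*(Re \<sigma>*Re \<tau> - Im \<sigma>*Im \<tau> - (Re z*Re z - Im z*Im z)) + j*Re z + n1*Re \<sigma> - m1*Re \<tau> + m2 = 0"
        using arg_cong[OF E, of Re] by (simp add: power2_eq_square)
      have im: "n2*(Re \<sigma>*Im \<tau> + Im \<sigma>*Re \<tau> - 2*Re z*Im z) + j*Im z + n1*Im \<sigma> - m1*Im \<tau> = 0"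
        using arg_cong[OF E, of Im] by (simp add: power2_eq_square algebra_simps)
      have y3p: "Im \<sigma> > 0" using y3 eps mpos by simp
      have y1p: "Im \<tau> > 0"
      proof -
        have "2 * real_of_int n / (real N * eps) > 0" using npos NN eps by simp
        thus ?thesis using y1 by linarith
      qed
      show False
      proof (cases "n2 = 0")
        case False
        have det: "Im \<tau> * Im \<sigma> - (Im z)^2 > 1"
        proof -
          have "Im \<tau> * Im \<sigma> > (2 * real_of_int n / (real N * eps)) * Im \<sigma>"
            by (rule mult_strict_right_mono[OF y1 y3p])
          also have "(2 * real_of_int n / (real N * eps)) * Im \<sigma> = 4 * (real_of_int n / real N) * real_of_int m / eps^2"
            using y3 eps NN by (simp add: field_simps power2_eq_square)
          finally have a0: "Im \<tau> * Im \<sigma> > 4 * (real_of_int n / real N) * real_of_int m / eps^2" .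
          have z2: "(Im z)^2 = (real_of_int l)^2 / eps^2" using y2 by (simp add: power_divide)
          have "c0 / eps^2 = 4 * (real_of_int n / real N) * real_of_int m / eps^2 - (real_of_int l)^2 / eps^2"
            unfolding c0_def by (simp add: diff_divide_distrib)
          hence a: "Im \<tau> * Im \<sigma> - (Im z)^2 > c0 / eps^2" using a0 z2 by linarith
          have "eps * eps < 1 * c0" using eps by (intro mult_strict_mono) auto
          hence "c0 / eps^2 > 1" using eps by (simp add: field_simps power2_eq_square)
          thus ?thesis using a by linarith
        qed
        have "real_of_int n2 ^2 \<ge> 1" using False
          by (metis abs_ge_zero abs_le_square_iff abs_of_nonneg le_less linorder_not_le of_int_1 of_int_le_iff of_int_power power_one zero_less_abs_iff int_one_le_iff_zero_less) 
        then show False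
          using case_n2[OF re im _ y1p y3p det] D by (simp add: algebra_simps)
      next
        case True
        have m1: "m1 \<noteq> 0" using nz True by simp
        have Di: "4*(m1*n1) + j^2 = 1"
        proof -
          have "real_of_int (4*(m1*n1) + j^2) = 1" using D True by (simp add: field_simps)
          thus ?thesis by (metis of_int_eq_1_iff)
        qed
        obtain k where js: "j = 2*k+1" using jo by (metis oddE)
        have ss: "k*(k+1) = -(m1*n1)" using Di unfolding js by (simp add: algebra_simps power2_eq_square)
        have cg: "[k * (k + 1) = 0] (mod m1)" unfolding ss by (simp add: cong_0_iff)
        have H: "((real_of_int (m1 * l + 2 * m * k + m)) / real_of_int m)^2
         + (real_of_int m1)^2 / (real_of_int m)^2 * c0 \<ge> 1" by (rule AA[OF dv cg])
        have jr: "real_of_int j ^2 = 1 - 4 * real_of_int m1 * real_of_int n1"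
          using arg_cong[OF Di, of real_of_int] by simp
        have "(real_of_int m1 * real_of_int l + real_of_int m * real_of_int j)^2 + (real_of_int m1)^2 * c0 \<ge> (real_of_int m)^2"
          using H mpos js by (simp add: field_simps)
        hence A: "real_of_int m1*real_of_int l*real_of_int j - 2*real_of_int m*real_of_int m1*real_of_int n1 + 2*(real_of_int m1)^2*real_of_int n/real N \<ge> 0"
          using alg_A[OF _ jr c0_def] mpos by simp
        have im0: "real_of_int j*Im z + real_of_int n1*Im \<sigma> - real_of_int m1*Im \<tau> = 0" using im True by simp
        show False using case_n20[OF im0 y2 y3 _ eps(1) NN _ _ A] y1 mpos m1 by simp
      qed
    qed
  qed
qed

end
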